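(* Let $k\ge 1$, $n\ge 100k$ and $3\le r<s\le 10k$ be integers. Then \[ \lambda(T_{n-s+2,2}\circ K_{s-1})<\lambda(T_{n-r+2,2}\circ K_{r-1}). \]
   Context: $\lambda(G)$ denotes the spectral radius of the adjacency matrix of $G$. $T_{m,2}$ denotes the complete bipartite graph on $m$ vertices with parts of sizes $\lfloor m/2\rfloor$ and $\lceil m/2\rceil$. For $t\ge 3$, $T_{n-t+2,2}\circ K_{t-1}$ is the $n$-vertex graph obtained by identifying a vertex of the complete graph $K_{t-1}$ with a vertex of the smaller part (of size $\lfloor (n-t+2)/2\rfloor$) of $T_{n-t+2,2}$. *)

theory Defs
  imports "Jordan_Normal_Form.Spectral_Radius"
begin

definition adj_matrix :: "nat \<Rightarrow> (nat \<Rightarrow> nat \<Rightarrow> bool) \<Rightarrow> complex mat" where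
  "adj_matrix n E = mat n n (\<lambda>(i, j). if E i j then 1 else 0)"

definition graph_lambda :: "nat \<Rightarrow> (nat \<Rightarrow> nat \<Rightarrow> bool) \<Rightarrow> real" where
  "graph_lambda n E = spectral_radius (adj_matrix n E)"

text \<open>The graph T_{n-t+2,2} o K_{t-1} on vertices {0..<n}: with m = n-t+2 and
  a = floor(m/2), the smaller part is {0..<a}, the larger part is {a..<m};
  the clique K_{t-1} is on {0} \<union> {m..<n} (t-1 vertices), sharing vertex 0
  with the smaller part.\<close>

definition TK_edge :: "nat \<Rightarrow> nat \<Rightarrow> nat \<Rightarrow> nat \<Rightarrow> bool" where
  "TK_edge n t i j =
     (let m = n + 2 - t; a = m div 2; C = insert 0 {m..<n} in
      i < n \<and> j < n \<and> i \<noteq> j \<and>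
      ((i < a \<and> a \<le> j \<and> j < m) \<or> (j < a \<and> a \<le> i \<and> i < m) \<or> (i \<in> C \<and> j \<in> C)))"

end

theory Submission
  imports Defs
begin

lemma collatz_upper:
  fixes A :: "complex mat" and x :: "nat \<Rightarrow> real" and B :: "nat \<Rightarrow> nat \<Rightarrow> real"
  assumes A: "A \<in> carrier_mat n n" and n: "n > 0"
  and ent: "\<And>i j. i<n \<Longrightarrow> j<n \<Longrightarrow> A$$(i,j) = complex_of_real (B i j)"
  and nonneg: "\<And>i j. i<n \<Longrightarrow> j<n \<Longrightarrow> B i j \<ge> 0"
  and xpos: "\<And>i. i<n \<Longrightarrow> x i > 0"
  and row: "\<And>i. i<n \<Longrightarrow> (\<Sum>j<n. B i j * x j) \<le> c * x i"
  shows "spectral_radius A \<le> c"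
proof -
  from spectral_radius_mem_max(1)[OF A n] obtain mu where mu: "mu \<in> spectrum A"
    and sr: "spectral_radius A = norm mu" by auto
  from mu obtain v where v: "v \<in> carrier_vec n" "v \<noteq> 0\<^sub>v n" "A *\<^sub>v v = mu \<cdot>\<^sub>v v"
    unfolding spectrum_def eigenvalue_def eigenvector_def using A by auto
  define r where "r j = norm (v$j) / x j" for j
  have fin: "finite (r ` {..<n})" "r ` {..<n} \<noteq> {}" using n by auto
  obtain i where i: "i < n" "r i = Max (r ` {..<n})"
    using Max_in[OF fin] by auto
  have rmax: "r j \<le> r i" if "j < n" for j using i fin that by auto
  obtain j0 where j0: "j0 < n" "v$j0 \<noteq> 0"
    using v(1,2) by (metis carrier_vecD eq_vecI index_zero_vec(1,2))
  have "r j0 > 0" unfolding r_def using j0 xpos by auto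
  hence ri: "r i > 0" using rmax[OF j0(1)] by auto
  hence vi: "norm (v$i) > 0" unfolding r_def using xpos[OF i(1)]
    by (simp add: zero_less_divide_iff)
  have bound: "norm (v$j) \<le> r i * x j" if "j < n" for j
    using rmax[OF that] xpos[OF that] unfolding r_def by (simp add: divide_le_eq)
  have "norm mu * norm (v$i) = norm ((A *\<^sub>v v) $ i)"
    using v(1) i(1) by (simp add: v(3) norm_mult)
  also have "(A *\<^sub>v v) $ i = (\<Sum>j<n. A$$(i,j) * v$j)"
    using A v(1) i(1) by (auto simp: scalar_prod_def lessThan_atLeast0 intro!: sum.cong)
  also have "norm \<dots> \<le> (\<Sum>j<n. norm (A$$(i,j) * v$j))" by (rule norm_sum)
  also have "\<dots> = (\<Sum>j<n. B i j * norm (v$j))"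
    using ent[OF i(1)] nonneg[OF i(1)] by (auto simp: norm_mult intro!: sum.cong)
  also have "\<dots> \<le> (\<Sum>j<n. B i j * (r i * x j))"
    using nonneg[OF i(1)] bound by (auto intro!: sum_mono mult_left_mono)
  also have "\<dots> = r i * (\<Sum>j<n. B i j * x j)"
    by (simp add: sum_distrib_left algebra_simps)
  also have "\<dots> \<le> r i * (c * x i)" using row[OF i(1)] ri by (simp add: mult_left_mono)
  also have "\<dots> = c * norm (v$i)" using xpos[OF i(1)] unfolding r_def by simp
  finally have "norm mu * norm (v$i) \<le> c * norm (v$i)" .
  hence "norm mu \<le> c" using vi by simp
  thus ?thesis using sr by simp
qed

lemma eig_lower:
  fixes A :: "complex mat" and u :: "nat \<Rightarrow> real" and B :: "nat \<Rightarrow> nat \<Rightarrow> real"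
  assumes A: "A \<in> carrier_mat n n"
  and ent: "\<And>i j. i<n \<Longrightarrow> j<n \<Longrightarrow> A$$(i,j) = complex_of_real (B i j)"
  and nz: "p < n" "u p \<noteq> 0"
  and row: "\<And>i. i<n \<Longrightarrow> (\<Sum>j<n. B i j * u j) = mu * u i"
  and mu: "mu \<ge> 0"
  shows "mu \<le> spectral_radius A"
proof -
  define v where "v = vec n (\<lambda>j. complex_of_real (u j))"
  have n: "n > 0" using nz by auto
  have "A *\<^sub>v v = complex_of_real mu \<cdot>\<^sub>v v"
  proof (rule eq_vecI)
    show "dim_vec (A *\<^sub>v v) = dim_vec (complex_of_real mu \<cdot>\<^sub>v v)" using A by (simp add: v_def)
    fix i assume "i < dim_vec (complex_of_real mu \<cdot>\<^sub>v v)"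
    hence i: "i < n" by (simp add: v_def)
    have "(A *\<^sub>v v) $ i = (\<Sum>j<n. A$$(i,j) * v$j)"
      using A i by (auto simp: scalar_prod_def lessThan_atLeast0 v_def intro!: sum.cong)
    also have "\<dots> = complex_of_real (\<Sum>j<n. B i j * u j)"
      using ent[OF i] by (auto simp: v_def intro!: sum.cong)
    also have "\<dots> = (complex_of_real mu \<cdot>\<^sub>v v) $ i" using row[OF i] i by (simp add: v_def)
    finally show "(A *\<^sub>v v) $ i = (complex_of_real mu \<cdot>\<^sub>v v) $ i" .
  qed
  moreover have "v \<noteq> 0\<^sub>v n"
  proof
    assume "v = 0\<^sub>v n"
    hence "v $ p = 0" using nz by simp
    thus False using nz by (simp add: v_def)
  qed
  moreover have "v \<in> carrier_vec n" by (simp add: v_def)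
  ultimately have "complex_of_real mu \<in> spectrum A"
    unfolding spectrum_def eigenvalue_def eigenvector_def using A by auto
  hence "norm (complex_of_real mu) \<in> norm ` spectrum A" by blast
  hence "norm (complex_of_real mu) \<le> spectral_radius A"
    using spectral_radius_mem_max(2)[OF A n] by blast
  thus ?thesis using mu by simp
qed

lemma TK_edge_iff:
  assumes "m = n + 2 - t" "a = m div 2" "2 \<le> t" "t \<le> n"
  shows "TK_edge n t i j \<longleftrightarrow> i<n \<and> j<n \<and> i\<noteq>j \<and> ((i<a \<and> a\<le>j \<and> j<m) \<or> (j<a \<and> a\<le>i \<and> i<m)
     \<or> ((i=0 \<or> m\<le>i) \<and> (j=0 \<or> m\<le>j)))"
  using assms unfolding TK_edge_def Let_def by auto

definition cls :: "nat \<Rightarrow> nat \<Rightarrow> real \<Rightarrow> real \<Rightarrow> real \<Rightarrow> real \<Rightarrow> nat \<Rightarrow> real" where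
  "cls a m w0 x y z j = (if j = 0 then w0 else if j < a then x else if j < m then y else z)"

lemma sum_const_on: "(\<And>j. j \<in> S \<Longrightarrow> f j = c) \<Longrightarrow> card S = k \<Longrightarrow> sum f S = real k * (c::real)"
  by simp

lemma row_sum:
  assumes t: "3 \<le> t" "t \<le> n" and m: "m = n + 2 - t" and a: "a = m div 2" and a2: "2 \<le> a" and i: "i < n"
  shows "(\<Sum>j<n. (if TK_edge n t i j then 1 else 0) * cls a m w0 x y z j) =
   (if i = 0 then real (m-a) * y + real (n-m) * z else if i < a then real (m-a)*y
    else if i < m then w0 + real (a-1) * x else w0 + (real (n-m) - 1) * z)"
proof -
  have am: "a < m" "m < n" using a a2 m t by auto
  have t2: "2 \<le> t" using t by simp
  note E = TK_edge_iff[OF m a t2 t(2)]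
  define f where "f j = (if TK_edge n t i j then 1 else 0) * cls a m w0 x y z j" for j
  have split: "sum f {..<n} = sum f {0..<1} + sum f {1..<a} + sum f {a..<m} + sum f {m..<n}"
  proof -
    have "sum f {0..<1} + sum f {1..<a} = sum f {0..<a}" using a2 by (intro sum.atLeastLessThan_concat) auto
    moreover have "sum f {0..<a} + sum f {a..<m} = sum f {0..<m}" using am by (intro sum.atLeastLessThan_concat) auto
    moreover have "sum f {0..<m} + sum f {m..<n} = sum f {0..<n}" using am by (intro sum.atLeastLessThan_concat) auto
    ultimately show ?thesis by (simp add: lessThan_atLeast0)
  qed
  have f0: "sum f {0..<1} = f 0" by simp
  have fsum: "(\<Sum>j<n. (if TK_edge n t i j then 1 else 0) * cls a m w0 x y z j) = sum f {..<n}" by (simp add: f_def)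
  show ?thesis
  proof (cases "i = 0")
    case True
    have "f 0 = 0" using True by (simp add: f_def E)
    moreover have "sum f {1..<a} = 0" using True t am a2 by (auto simp: f_def E intro!: sum.neutral)
    moreover have "sum f {a..<m} = real (m-a) * y" using True t am a2
      by (intro sum_const_on) (auto simp: f_def E cls_def)
    moreover have "sum f {m..<n} = real (n-m) * z" using True t am a2
      by (intro sum_const_on) (auto simp: f_def E cls_def)
    ultimately show ?thesis unfolding fsum using split f0 True by simp
  next
    case i0: False
    show ?thesis
    proof (cases "i < a")
      case True
      have "f 0 = 0" using True i0 am a2 by (simp add: f_def E)
      moreover have "sum f {1..<a} = 0" using True t am a2 by (auto simp: f_def E intro!: sum.neutral)
      moreover have "sum f {a..<m} = real (m-a) * y" using True i0 t am a2
        by (intro sum_const_on) (auto simp: f_def E cls_def)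
      moreover have "sum f {m..<n} = 0" using True i0 t am a2
        by (auto simp: f_def E intro!: sum.neutral)
      ultimately show ?thesis unfolding fsum using split f0 True i0 by simp
    next
      case ia: False
      show ?thesis
      proof (cases "i < m")
        case True
        have "f 0 = w0" using True ia i0 am a2 by (simp add: f_def E cls_def)
        moreover have "sum f {1..<a} = real (a-1) * x" using True ia i0 t am a2
          by (intro sum_const_on) (auto simp: f_def E cls_def)
        moreover have "sum f {a..<m} = 0" using True ia t am a2 by (auto simp: f_def E intro!: sum.neutral)
        moreover have "sum f {m..<n} = 0" using True ia i0 t am a2
          by (auto simp: f_def E intro!: sum.neutral)
        ultimately show ?thesis unfolding fsum using split f0 True i0 ia by simp
      next
        case im: False
        have "f 0 = w0" using im i0 am i a2 by (simp add: f_def E cls_def)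
        moreover have "sum f {1..<a} = 0" using im t am a2 by (auto simp: f_def E intro!: sum.neutral)
        moreover have "sum f {a..<m} = 0" using im ia t am a2 by (auto simp: f_def E intro!: sum.neutral)
        moreover have "sum f {m..<n} = (real (n-m) - 1) * z"
        proof -
          have iin: "i \<in> {m..<n}" using im i by auto
          have "sum f {m..<n} = f i + sum f ({m..<n} - {i})" using sum.remove[OF _ iin] by simp
          also have "f i = 0" by (simp add: f_def E)
          also have "sum f ({m..<n} - {i}) = sum (\<lambda>_. z) ({m..<n} - {i})"
            using im i am a2 by (intro sum.cong) (auto simp: f_def E cls_def)
          also have "\<dots> = (real (n-m) - 1) * z" using iin am a2
            by (simp add: of_nat_diff)
          finally show ?thesis by simp
        qed
        ultimately show ?thesis unfolding fsum using split f0 i0 ia im by simp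
      qed
    qed
  qed
qed

lemma key_c:
  fixes a b t c :: real
  assumes key: "(t-2) * (b+1) \<le> a * (a - t + 3)" and ca: "c \<ge> a" and a: "a > 0"
    and t: "t \<ge> 3" and b: "b \<ge> 0"
  shows "(t-2) * (b+1) \<le> c * (c - t + 3)"
proof -
  have "(t-2) * (b+1) \<ge> 0" using t b by simp
  hence "a * (a - t + 3) \<ge> 0" using key by linarith
  hence "a - t + 3 \<ge> 0" using a by (simp add: zero_le_mult_iff)
  hence "(c - a) * (c + a - (t - 3)) \<ge> 0" using ca a by (intro mult_nonneg_nonneg) auto
  hence "c * (c - t + 3) \<ge> a * (a - t + 3)" by (simp add: algebra_simps)
  thus ?thesis using key by linarith
qed

lemma adj_ent: "i < n \<Longrightarrow> j < n \<Longrightarrow> adj_matrix n E $$ (i,j) = complex_of_real (if E i j then 1 else 0)"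
  by (simp add: adj_matrix_def)

lemma adj_carrier: "adj_matrix n E \<in> carrier_mat n n" by (simp add: adj_matrix_def)

lemma bounds:
  assumes t: "3 \<le> t" "t \<le> n" and m: "m = n + 2 - t" and a: "a = m div 2" and b: "b = m - a"
    and a2: "2 \<le> a"
    and key: "(real t - 2) * (real b + 1) \<le> real a * (real a - real t + 3)"
  shows "sqrt (real a * real b) \<le> graph_lambda n (TK_edge n t)"
    and "graph_lambda n (TK_edge n t) \<le> sqrt (real a * real b + 1)"
proof -
  define Bm where "Bm i j = (if TK_edge n t i j then 1 else (0::real))" for i j
  have ent: "\<And>i j. i<n \<Longrightarrow> j<n \<Longrightarrow> adj_matrix n (TK_edge n t) $$ (i,j) = complex_of_real (Bm i j)"
    by (simp add: adj_ent Bm_def)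
  have ab: "a \<le> b" "b \<le> a + 1" using a b by auto
  have nm: "real (n - m) = real t - 2" using m t by auto
  have am: "a < m" "m < n" using a a2 m t by auto
  have n0: "n > 0" using am by auto
  have bpos: "real b > 0" using ab a2 by auto
  have apos: "real a > 0" using a2 by auto
  have ta: "real t - 3 < real a"
  proof -
    have "(real t - 2) * (real b + 1) > 0" using t bpos by auto
    hence "real a * (real a - real t + 3) > 0" using key by linarith
    thus ?thesis using apos by (simp add: zero_less_mult_iff)
  qed
  note RS = row_sum[OF t m a a2]
  have lam: "graph_lambda n (TK_edge n t) = spectral_radius (adj_matrix n (TK_edge n t))"
    by (simp add: graph_lambda_def)
  have aab: "real a * real a \<le> real a * real b" using ab by (simp add: mult_left_mono)
  define c where "c = sqrt (real a * real b + 1)"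
  have c2: "c * c = real a * real b + 1" unfolding c_def by (simp add: bpos apos)
  have cpos: "c \<ge> 0" unfolding c_def by simp
  have ca: "c \<ge> real a"
  proof -
    have "real a * real a \<le> c * c" using c2 aab by linarith
    hence "(real a)^2 \<le> c^2" by (simp add: power2_eq_square)
    from power2_le_imp_le[OF this cpos] show ?thesis .
  qed
  have kc: "(real t - 2) * (real b + 1) \<le> c * (c - real t + 3)"
    by (rule key_c[OF key ca apos]) (use t in auto)
  have upper: "graph_lambda n (TK_edge n t) \<le> c"
  proof -
    define w0 where "w0 = 1 + 1 / real b"
    define y where "y = c / real b"
    define z where "z = w0 / (c - real t + 3)"
    have d: "c - real t + 3 > 0" using ca ta by linarith
    have w0p: "w0 > 0" unfolding w0_def using bpos by (simp add: add_pos_pos)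
    have ypos: "y > 0" unfolding y_def using ca apos bpos by simp
    have zpos: "z > 0" unfolding z_def using w0p d by simp
    show ?thesis unfolding lam
    proof (rule collatz_upper[OF adj_carrier n0 ent, where x = "cls a m w0 1 y z"])
      show "\<And>i j. 0 \<le> Bm i j" by (simp add: Bm_def)
      show "\<And>i. i < n \<Longrightarrow> 0 < cls a m w0 1 y z i" using w0p ypos zpos by (simp add: cls_def)
      fix i assume i: "i < n"
      have rs: "(\<Sum>j<n. Bm i j * cls a m w0 1 y z j) = (if i = 0 then real (m-a) * y + real (n-m) * z else if i < a then real (m-a)*y
    else if i < m then w0 + real (a-1) * 1 else w0 + (real (n-m) - 1) * z)"
        using RS[OF i, of w0 1 y z] by (simp add: Bm_def)
      have by_: "real (m-a) * y = c" using b bpos unfolding y_def by simp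
      have r0: "real b * y + (real t - 2) * z \<le> c * w0"
      proof -
        have wb: "w0 * real b = real b + 1" unfolding w0_def using bpos by (simp add: field_simps)
        have eq: "(real t - 2) * w0 * real b = (real t - 2) * (real b + 1)" using wb by (simp add: mult.assoc)
        have "(real t - 2) * w0 * real b \<le> c * (c - real t + 3)" unfolding eq by (rule kc)
        hence "(real t - 2) * w0 / (c - real t + 3) \<le> c / real b"
          using d bpos by (simp add: field_simps)
        thus ?thesis unfolding z_def y_def w0_def using bpos by (simp add: field_simps)
      qed
      have rL: "w0 + real (a-1) \<le> c * y"
      proof -
        have "c * y = (real a * real b + 1) / real b" unfolding y_def using c2 by (simp add: field_simps)
        also have "\<dots> = real a + 1 / real b" using bpos by (simp add: field_simps)
        finally show ?thesis unfolding w0_def using a2 by (simp add: of_nat_diff)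
      qed
      have rQ: "w0 + (real t - 3) * z \<le> c * z"
        unfolding z_def using d by (simp add: field_simps)
      have bb: "real (m-a) = real b" using b by simp
      show "(\<Sum>j<n. Bm i j * cls a m w0 1 y z j) \<le> c * cls a m w0 1 y z i"
      proof (cases "i = 0")
        case True thus ?thesis unfolding rs using r0 nm bb by (simp add: cls_def)
      next
        case i0: False
        show ?thesis
        proof (cases "i < a")
          case True thus ?thesis unfolding rs using i0 by_ by (simp add: cls_def)
        next
          case ia: False
          show ?thesis
          proof (cases "i < m")
            case True thus ?thesis unfolding rs using i0 ia rL by (simp add: cls_def)
          next
            case False
            show ?thesis unfolding rs using i0 ia False rQ nm by (simp add: cls_def)
          qed
        qed
      qed
    qed
  qed
  thus "graph_lambda n (TK_edge n t) \<le> sqrt (real a * real b + 1)" unfolding c_def .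
  define mu0 where "mu0 = sqrt (real a * real b)"
  have m02: "mu0 * mu0 = real a * real b" unfolding mu0_def using apos bpos by simp
  have m0c: "mu0 \<le> c" unfolding mu0_def c_def by simp
  have m0a: "mu0 \<ge> real a" 
  proof -
    have "real a * real a \<le> mu0 * mu0" using m02 aab by linarith
    moreover have "mu0 \<ge> 0" unfolding mu0_def by simp
    ultimately show ?thesis using power2_le_imp_le[of "real a" mu0] by (simp add: power2_eq_square)
  qed
  define W where "W mu = mu * mu / real b - (real a - 1)" for mu
  define g where "g mu = mu * W mu * (mu - real t + 3) - mu * (mu - real t + 3) - (real t - 2) * W mu" for mu
  have W0: "W mu0 = 1" unfolding W_def using m02 bpos by (simp add: field_simps)
  have Wc: "W c = 1 + 1 / real b" unfolding W_def using c2 bpos by (simp add: field_simps)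
  have g0: "g mu0 \<le> 0" unfolding g_def W0 using t by simp
  have gc: "0 \<le> g c"
  proof -
    have "g c = (c * (c - real t + 3) - (real t - 2) * (real b + 1)) / real b"
      unfolding g_def Wc using bpos by (simp add: field_simps)
    thus ?thesis using kc bpos by simp
  qed
  have cont: "continuous_on {mu0..c} g" unfolding g_def W_def using bpos by (intro continuous_intros) auto
  obtain mu where mu: "mu0 \<le> mu" "mu \<le> c" "g mu = 0" using IVT'[of g mu0 0 c, OF g0 gc m0c cont] by auto
  have mua: "mu \<ge> real a" using mu m0a by linarith
  have d: "mu - real t + 3 > 0" using mua ta by linarith
  define z where "z = W mu / (mu - real t + 3)"
  define y where "y = mu / real b"
  have "mu \<le> spectral_radius (adj_matrix n (TK_edge n t))"
  proof (rule eig_lower[OF adj_carrier ent, where u = "cls a m (W mu) 1 y z" and p = 1])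
    show "1 < n" using am a2 by simp
    show "cls a m (W mu) 1 y z 1 \<noteq> 0" using a2 by (simp add: cls_def)
    show "0 \<le> mu" using mua by simp
    fix i assume i: "i < n"
    have rs: "(\<Sum>j<n. Bm i j * cls a m (W mu) 1 y z j) = (if i = 0 then real (m-a) * y + real (n-m) * z else if i < a then real (m-a)*y
    else if i < m then W mu + real (a-1) * 1 else W mu + (real (n-m) - 1) * z)"
      using RS[OF i, of "W mu" 1 y z] by (simp add: Bm_def)
    have by_: "real (m-a) * y = mu" using b bpos unfolding y_def by simp
    have r0: "real b * y + (real t - 2) * z = mu * W mu"
    proof -
      have "mu * W mu * (mu - real t + 3) = mu * (mu - real t + 3) + (real t - 2) * W mu"
        using mu(3) unfolding g_def by linarith
      hence "mu * W mu = mu + (real t - 2) * W mu / (mu - real t + 3)"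
        using d by (simp add: field_simps)
      thus ?thesis unfolding z_def y_def using bpos by simp
    qed
    have rL: "W mu + real (a-1) = mu * y"
      unfolding W_def y_def using a2 bpos by (simp add: of_nat_diff field_simps)
    have rQ: "W mu + (real t - 3) * z = mu * z"
      unfolding z_def using d by (simp add: field_simps)
    have bb: "real (m-a) = real b" using b by simp
    show "(\<Sum>j<n. Bm i j * cls a m (W mu) 1 y z j) = mu * cls a m (W mu) 1 y z i"
    proof (cases "i = 0")
      case True thus ?thesis unfolding rs using r0 nm bb by (simp add: cls_def)
    next
      case i0: False
      show ?thesis
      proof (cases "i < a")
        case True thus ?thesis unfolding rs using i0 by_ by (simp add: cls_def)
      next
        case ia: False
        show ?thesis
        proof (cases "i < m")
          case True thus ?thesis unfolding rs using i0 ia rL by (simp add: cls_def)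
        next
          case False
          show ?thesis unfolding rs using i0 ia False rQ nm by (simp add: cls_def)
        qed
      qed
    qed
  qed
  thus "sqrt (real a * real b) \<le> graph_lambda n (TK_edge n t)"
    using mu(1) unfolding lam mu0_def by linarith
qed

lemma floor_sq:
  fixes m :: nat
  shows "4 * ((m div 2) * (m - m div 2)) \<le> m * m" "m * m \<le> 4 * ((m div 2) * (m - m div 2)) + 1"
proof -
  define q where "q = m div 2"
  have "m = 2*q \<or> m = 2*q+1" unfolding q_def by presburger
  then consider "m = 2*q" | "m = 2*q+1" by blast
  then show "4 * ((m div 2) * (m - m div 2)) \<le> m * m" "m * m \<le> 4 * ((m div 2) * (m - m div 2)) + 1"
    by (cases; simp add: algebra_simps)+
qed

lemma key_nat:
  fixes t a b :: nat
  assumes t: "3 \<le> t" and a: "9 * t + 1 \<le> 2 * a" and b: "b \<le> a + 1"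
  shows "(real t - 2) * (real b + 1) \<le> real a * (real a - real t + 3)"
proof -
  have T: "real t \<ge> 3" using t by simp
  have "real (9*t+1) \<le> real (2*a)" using a by (simp only: of_nat_le_iff)
  hence A: "2 * real a \<ge> 9 * real t + 1" by simp
  have B: "real b \<le> real a + 1" using b by simp
  have "(real t - 2) * (real b + 1) \<le> (real t - 2) * (real a + 2)"
    using T B by (intro mult_left_mono) auto
  also have "\<dots> \<le> real t * (real a + 2)" using T by (intro mult_right_mono) auto
  also have "\<dots> \<le> real a * (3 * real t)"
  proof -
    have "2 * real t \<le> 2 * real t * real a" using A T by simp
    thus ?thesis by (simp add: algebra_simps)
  qed
  also have "\<dots> \<le> real a * (real a - real t + 3)" using A T by (intro mult_left_mono) auto
  finally show ?thesis .
qed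

lemma params:
  fixes k n t :: nat
  assumes "k \<ge> 1" "n \<ge> 100 * k" "3 \<le> t" "t \<le> 10 * k"
  shows "t \<le> n" "9 * t + 1 \<le> 2 * ((n + 2 - t) div 2)" "2 \<le> (n + 2 - t) div 2"
    "(n + 2 - t) - (n + 2 - t) div 2 \<le> (n + 2 - t) div 2 + 1"
proof -
  have n: "10 * t \<le> n" using assms by linarith
  show "t \<le> n" using n by linarith
  define m where "m = n + 2 - t"
  have m: "9 * t + 2 \<le> m" using n unfolding m_def by linarith
  have d: "m \<le> 2 * (m div 2) + 1" "m div 2 \<le> m" by auto
  show "9 * t + 1 \<le> 2 * ((n + 2 - t) div 2)" using m d unfolding m_def[symmetric] by linarith
  show "2 \<le> (n + 2 - t) div 2" using m d assms(3) unfolding m_def[symmetric] by linarith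
  show "(n + 2 - t) - (n + 2 - t) div 2 \<le> (n + 2 - t) div 2 + 1" using d unfolding m_def[symmetric] by linarith
qed

lemma bounds':
  fixes k n t :: nat
  assumes "k \<ge> 1" "n \<ge> 100 * k" "3 \<le> t" "t \<le> 10 * k"
  shows "sqrt (real ((n + 2 - t) div 2) * real ((n + 2 - t) - (n + 2 - t) div 2)) \<le> graph_lambda n (TK_edge n t)"
    and "graph_lambda n (TK_edge n t) \<le> sqrt (real ((n + 2 - t) div 2) * real ((n + 2 - t) - (n + 2 - t) div 2) + 1)"
  using bounds[OF assms(3) params(1)[OF assms] refl refl refl params(3)[OF assms]
      key_nat[OF assms(3) params(2)[OF assms] params(4)[OF assms]]] by auto

theorem lemma2p8:
  fixes k n r s :: nat
  assumes "k \<ge> 1" and "n \<ge> 100 * k" and "3 \<le> r" and "r < s" and "s \<le> 10 * k"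
  shows "graph_lambda n (TK_edge n s) < graph_lambda n (TK_edge n r)"
proof -
  define ms where "ms = n + 2 - s"
  define mr where "mr = n + 2 - r"
  have mrs: "ms + 1 \<le> mr" "mr \<ge> 4" using assms unfolding ms_def mr_def by auto
  define P where "P m = (m div 2) * (m - m div 2)" for m :: nat
  have U: "graph_lambda n (TK_edge n s) \<le> sqrt (real (P ms) + 1)"
    using bounds'(2)[of k n s] assms unfolding P_def ms_def by auto
  have L: "sqrt (real (P mr)) \<le> graph_lambda n (TK_edge n r)"
    using bounds'(1)[of k n r] assms unfolding P_def mr_def by auto
  have "P ms + 1 < P mr"
  proof -
    have 1: "4 * P ms \<le> ms * ms" using floor_sq(1) unfolding P_def .
    have 2: "mr * mr \<le> 4 * P mr + 1" using floor_sq(2) unfolding P_def .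
    have "ms * ms \<le> (mr - 1) * (mr - 1)" using mrs by (intro mult_mono) auto
    moreover have "(mr - 1) * (mr - 1) + 6 \<le> mr * mr"
    proof -
      define M where "M = mr - 1"
      have M: "mr = M + 1" "M \<ge> 3" using mrs unfolding M_def by auto
      have "M * 3 \<le> M * M" using M(2) by (intro mult_left_mono) auto
      thus ?thesis using M by (simp add: algebra_simps)
    qed
    ultimately show ?thesis using 1 2 by linarith
  qed
  hence "real (P ms) + 1 < real (P mr)" by linarith
  hence "sqrt (real (P ms) + 1) < sqrt (real (P mr))" by simp
  thus ?thesis using U L by linarith
qed

end
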